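(* Let $\mathbf{P}=(\mathbf{P}^{(0)},\mathbf{P}^{(1)},\ldots,\mathbf{P}^{(K_1)})$ be a $(K_1,K_2;F;Z_1,Z_2;\mathcal{S}_\mathrm{m},\mathcal{S}_1,\ldots,\mathcal{S}_{K_1})$ HPDA. Then for every $N\ge K_1K_2$ there exists an $F$-division coded caching scheme with uncoded placement for the $(K_1,K_2;M_1,M_2;N)$ hierarchical caching system with $$\frac{M_1}{N}=\frac{Z_1}{F},\qquad \frac{M_2}{N}=\frac{Z_2}{F},$$ and transmission loads $$R_1=\frac{\left|\bigcup_{k_1=1}^{K_1}\mathcal{S}_{k_1}\right|-|\mathcal{S}_\mathrm{m}|}{F},\qquad R_2=\max_{k_1\in[K_1]}\frac{|\mathcal{S}_{k_1}|}{F}.$$ In this scheme mirror site $k_1$ caches packet $W_{n,j}$ of every file iff $p^{(0)}_{j,k_1}=*$, and user $U_{k_1,k_2}$ caches $W_{n,j}$ of every file iff $p^{(k_1)}_{j,k_2}=*$.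
   Context: Notation: $[a]=\{1,\ldots,a\}$, $[a:b]=\{a,\ldots,b\}$. PDA. For positive integers $K,F,Z,S$ and an integer set $\mathcal{S}$ with $|\mathcal{S}|=S$, an $F\times K$ array $\mathbf{Q}=(q_{j,k})$ with entries in $\{*\}\cup\mathcal{S}$ is a $(K,F,Z,S)$ placement delivery array (PDA) (over $\mathcal{S}$; by default $\mathcal{S}=[S]$) if: (C1) the symbol $*$ appears exactly $Z$ times in each column; (C2) each integer of $\mathcal{S}$ occurs at least once in the array; (C3) for two distinct entries $q_{j_1,k_1}=q_{j_2,k_2}=s$ with $s$ an integer, we have $j_1\ne j_2$, $k_1\ne k_2$, and $q_{j_1,k_2}=q_{j_2,k_1}=*$. HPDA. Let $K_1,K_2,F,Z_1,Z_2$ be positive integers with $Z_1<F$, $Z_2<F$, and let $\mathcal{S}_\mathrm{m},\mathcal{S}_1,\ldots,\mathcal{S}_{K_1}$ be sets of integers. An $F\times(K_1+K_1K_2)$ array $\mathbf{P}=(\mathbf{P}^{(0)},\mathbf{P}^{(1)},\ldots,\mathbf{P}^{(K_1)})$, where $\mathbf{P}^{(0)}=(p^{(0)}_{j,k_1})_{j\in[F],k_1\in[K_1]}$ has every entry equal to $*$ or to "null" (blank), and for each $k_1\in[K_1]$, $\mathbf{P}^{(k_1)}=(p^{(k_1)}_{j,k_2})_{j\in[F],k_2\in[K_2]}$ has entries in $\{*\}\cup\mathcal{S}_{k_1}$, is a $(K_1,K_2;F;Z_1,Z_2;\mathcal{S}_\mathrm{m},\mathcal{S}_1,\ldots,\mathcal{S}_{K_1})$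 hierarchical placement delivery array (HPDA) if: (B1) each column of $\mathbf{P}^{(0)}$ contains exactly $Z_1$ stars; (B2) for each $k_1\in[K_1]$, $\mathbf{P}^{(k_1)}$ is a $(K_2,F,Z_2,|\mathcal{S}_{k_1}|)$ PDA over $\mathcal{S}_{k_1}$; (B3) each integer $s\in\mathcal{S}_\mathrm{m}$ occurs in exactly one of the subarrays $\mathbf{P}^{(1)},\ldots,\mathbf{P}^{(K_1)}$, and whenever $p^{(k_1)}_{j,k_2}=s\in\mathcal{S}_\mathrm{m}$ we have $p^{(0)}_{j,k_1}=*$; (B4) for any $k_1\ne k_1'\in[K_1]$, $j,j'\in[F]$, $k_2,k_2'\in[K_2]$ with $p^{(k_1)}_{j,k_2}=p^{(k_1')}_{j',k_2'}$ an integer: if $p^{(k_1)}_{j',k_2}$ is an integer then $p^{(0)}_{j',k_1}=*$; and if $p^{(k_1')}_{j,k_2'}$ is an integer then $p^{(0)}_{j,k_1'}=*$. Hierarchical caching model $(K_1,K_2;M_1,M_2;N)$. A server stores $N$ independent files $W_1,\ldots,W_N$, each uniformly distributed on $B$ bits. There are $K_1$ mirror sites, each with a cache of $M_1B$ bits, and $K_1K_2$ users $U_{k_1,k_2}$ ($k_1\in[K_1]$, $k_2\in[K_2]$), each with a cache of $M_2B$ bits; user $U_{k_1,k_2}$ is attached to mirror site $k_1$. The server reaches all mirror sites through one error-free broadcast link; mirror site $k_1$ reaches its $K_2$ attached users through an error-free broadcast link. An $F$-division scheme with uncoded placement ($F\mid B$): each file $W_n$ is split into $F$ packets $W_{n,1},\ldots,W_{n,F}$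 of $B/F$ bits. In the placement phase (without knowledge of demands) mirror site $k_1$ stores a set $\mathcal{Z}_{k_1}$ of packets of total size at most $M_1B$ bits and user $U_{k_1,k_2}$ stores a set $\mathcal{Z}_{(k_1,k_2)}$ of packets of total size at most $M_2B$ bits. In the delivery phase, given a demand vector $\mathbf{d}=(d_{k_1,k_2})\in[N]^{K_1K_2}$, the server broadcasts to the mirror sites a message $X$ consisting of $S(\mathbf{d})$ packet-sized symbols, a function of the files and $\mathbf{d}$; each mirror site $k_1$ broadcasts to its attached users a message $X_{k_1}$ of $S_{k_1}(\mathbf{d})$ packet-sized symbols, a function of $X$, $\mathcal{Z}_{k_1}$ and $\mathbf{d}$; each user $U_{k_1,k_2}$ must recover $W_{d_{k_1,k_2}}$ from $X_{k_1}$, $\mathcal{Z}_{(k_1,k_2)}$ and $\mathbf{d}$. The loads are $R_1=\max_{\mathbf{d}}S(\mathbf{d})/F$ and $R_2=\max_{k_1,\mathbf{d}}S_{k_1}(\mathbf{d})/F$. *)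

theory Defs
  imports Complex_Main
begin

text \<open>An entry of a (sub)array P^(k1) or a PDA: either the star symbol or an integer.
  Arrays are functions row j (in [F]) => column k => entry, indices 1-based.\<close>
datatype cell = Star | Val int

definition is_PDA_over :: "nat \<Rightarrow> nat \<Rightarrow> nat \<Rightarrow> int set \<Rightarrow> (nat \<Rightarrow> nat \<Rightarrow> cell) \<Rightarrow> bool" where
  "is_PDA_over K F Z S Q \<longleftrightarrow>
     K > 0 \<and> F > 0 \<and> Z > 0 \<and> finite S \<and> card S > 0 \<and>
     (\<forall>j\<in>{1..F}. \<forall>k\<in>{1..K}. Q j k = Star \<or> (\<exists>s\<in>S. Q j k = Val s)) \<and>
     (\<forall>k\<in>{1..K}. card {j\<in>{1..F}. Q j k = Star} = Z) \<and>
     (\<forall>s\<in>S. \<exists>j\<in>{1..F}. \<exists>k\<in>{1..K}. Q j k = Val s) \<and>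
     (\<forall>j1\<in>{1..F}. \<forall>k1\<in>{1..K}. \<forall>j2\<in>{1..F}. \<forall>k2\<in>{1..K}. \<forall>s.
        (j1, k1) \<noteq> (j2, k2) \<and> Q j1 k1 = Val s \<and> Q j2 k2 = Val s \<longrightarrow>
        j1 \<noteq> j2 \<and> k1 \<noteq> k2 \<and> Q j1 k2 = Star \<and> Q j2 k1 = Star)"

text \<open>HPDA. P0 j k1 = True means the entry p^(0)_{j,k1} is a star, False means null.
  P k1 j k2 is the entry p^(k1)_{j,k2}; Ss k1 is the set S_{k1}; Sm is S_m.\<close>
definition is_HPDA ::
  "nat \<Rightarrow> nat \<Rightarrow> nat \<Rightarrow> nat \<Rightarrow> nat \<Rightarrow> int set \<Rightarrow> (nat \<Rightarrow> int set) \<Rightarrow>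
   (nat \<Rightarrow> nat \<Rightarrow> bool) \<Rightarrow> (nat \<Rightarrow> nat \<Rightarrow> nat \<Rightarrow> cell) \<Rightarrow> bool" where
  "is_HPDA K1 K2 F Z1 Z2 Sm Ss P0 P \<longleftrightarrow>
     K1 > 0 \<and> K2 > 0 \<and> F > 0 \<and> Z1 > 0 \<and> Z2 > 0 \<and> Z1 < F \<and> Z2 < F \<and>
     (\<forall>k1\<in>{1..K1}. card {j\<in>{1..F}. P0 j k1} = Z1) \<and>
     (\<forall>k1\<in>{1..K1}. is_PDA_over K2 F Z2 (Ss k1) (P k1)) \<and>
     (\<forall>s\<in>Sm. (\<exists>!k1. k1 \<in> {1..K1} \<and> (\<exists>j\<in>{1..F}. \<exists>k2\<in>{1..K2}. P k1 j k2 = Val s)) \<and>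
        (\<forall>k1\<in>{1..K1}. \<forall>j\<in>{1..F}. \<forall>k2\<in>{1..K2}. P k1 j k2 = Val s \<longrightarrow> P0 j k1)) \<and>
     (\<forall>k1\<in>{1..K1}. \<forall>k1'\<in>{1..K1}. \<forall>j\<in>{1..F}. \<forall>j'\<in>{1..F}.
        \<forall>k2\<in>{1..K2}. \<forall>k2'\<in>{1..K2}. \<forall>s.
        k1 \<noteq> k1' \<and> P k1 j k2 = Val s \<and> P k1' j' k2' = Val s \<longrightarrow>
          ((\<exists>t. P k1 j' k2 = Val t) \<longrightarrow> P0 j' k1) \<and>
          ((\<exists>t. P k1' j k2' = Val t) \<longrightarrow> P0 j k1'))"

text \<open>Files: W n j is packet j (in [F]) of file n (in [N]), a bit string of length L = B/F.
  A demand vector: d k1 k2 \<in> [N] is the file requested by user U_{k1,k2}.\<close>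
type_synonym files = "nat \<Rightarrow> nat \<Rightarrow> bool list"
type_synonym demand = "nat \<Rightarrow> nat \<Rightarrow> nat"

definition valid_files :: "nat \<Rightarrow> nat \<Rightarrow> nat \<Rightarrow> files \<Rightarrow> bool" where
  "valid_files N F L W \<longleftrightarrow> (\<forall>n\<in>{1..N}. \<forall>j\<in>{1..F}. length (W n j) = L)"

definition valid_demand :: "nat \<Rightarrow> nat \<Rightarrow> nat \<Rightarrow> demand \<Rightarrow> bool" where
  "valid_demand K1 K2 N d \<longleftrightarrow> (\<forall>k1\<in>{1..K1}. \<forall>k2\<in>{1..K2}. d k1 k2 \<in> {1..N})"

definition depends_only_on :: "(nat \<times> nat) set \<Rightarrow> (files \<Rightarrow> 'b) \<Rightarrow> bool" where
  "depends_only_on C g \<longleftrightarrow>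
     (\<forall>W W'. (\<forall>(n, j)\<in>C. W n j = W' n j) \<longrightarrow> g W = g W')"

text \<open>
  hier_scheme K1 K2 M1 M2 N F L R1 R2 ZM ZU X S Y T Dec:
  ZM k1 = set of packets (n,j) cached by mirror k1; ZU k1 k2 = packets cached by U_{k1,k2};
  X d W = server broadcast (list of S d packet-sized symbols);
  Y k1 d Xs W = broadcast of mirror k1 (T k1 d symbols), a function of Xs, its cache and d;
  Dec k1 k2 d Ys W j = user U_{k1,k2}'s estimate of packet j of its requested file,
  a function of Ys, its cache and d.\<close>
definition hier_scheme ::
  "nat \<Rightarrow> nat \<Rightarrow> real \<Rightarrow> real \<Rightarrow> nat \<Rightarrow> nat \<Rightarrow> nat \<Rightarrow> real \<Rightarrow> real \<Rightarrow>
   (nat \<Rightarrow> (nat \<times> nat) set) \<Rightarrow> (nat \<Rightarrow> nat \<Rightarrow> (nat \<times> nat) set) \<Rightarrow>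
   (demand \<Rightarrow> files \<Rightarrow> bool list list) \<Rightarrow> (demand \<Rightarrow> nat) \<Rightarrow>
   (nat \<Rightarrow> demand \<Rightarrow> bool list list \<Rightarrow> files \<Rightarrow> bool list list) \<Rightarrow> (nat \<Rightarrow> demand \<Rightarrow> nat) \<Rightarrow>
   (nat \<Rightarrow> nat \<Rightarrow> demand \<Rightarrow> bool list list \<Rightarrow> files \<Rightarrow> nat \<Rightarrow> bool list) \<Rightarrow> bool" where
  "hier_scheme K1 K2 M1 M2 N F L R1 R2 ZM ZU X S Y T Dec \<longleftrightarrow>
     \<comment> \<open>placement and memory constraints (each packet has B/F bits, B = F L)\<close>
     (\<forall>k1\<in>{1..K1}. ZM k1 \<subseteq> {1..N} \<times> {1..F} \<and> real (card (ZM k1)) * real L \<le> M1 * real (F * L)) \<and>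
     (\<forall>k1\<in>{1..K1}. \<forall>k2\<in>{1..K2}.
        ZU k1 k2 \<subseteq> {1..N} \<times> {1..F} \<and> real (card (ZU k1 k2)) * real L \<le> M2 * real (F * L)) \<and>
     \<comment> \<open>message formats\<close>
     (\<forall>d W. valid_demand K1 K2 N d \<and> valid_files N F L W \<longrightarrow>
        length (X d W) = S d \<and> (\<forall>x\<in>set (X d W). length x = L) \<and>
        (\<forall>k1\<in>{1..K1}. length (Y k1 d (X d W) W) = T k1 d \<and>
           (\<forall>y\<in>set (Y k1 d (X d W) W). length y = L))) \<and>
     \<comment> \<open>mirror messages depend on files only through the mirror cache\<close>
     (\<forall>k1\<in>{1..K1}. \<forall>d Xs. valid_demand K1 K2 N d \<longrightarrow> depends_only_on (ZM k1) (Y k1 d Xs)) \<and>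
     \<comment> \<open>decoders depend on files only through the user cache\<close>
     (\<forall>k1\<in>{1..K1}. \<forall>k2\<in>{1..K2}. \<forall>d Ys. valid_demand K1 K2 N d \<longrightarrow>
        depends_only_on (ZU k1 k2) (Dec k1 k2 d Ys)) \<and>
     \<comment> \<open>correct decoding\<close>
     (\<forall>d W. valid_demand K1 K2 N d \<and> valid_files N F L W \<longrightarrow>
        (\<forall>k1\<in>{1..K1}. \<forall>k2\<in>{1..K2}. \<forall>j\<in>{1..F}.
           Dec k1 k2 d (Y k1 d (X d W) W) W j = W (d k1 k2) j)) \<and>
     \<comment> \<open>loads: R1 = max_d S(d)/F, R2 = max_{k1,d} T(k1,d)/F\<close>
     (\<forall>d. valid_demand K1 K2 N d \<longrightarrow> real (S d) / real F \<le> R1) \<and>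
     (\<exists>d. valid_demand K1 K2 N d \<and> real (S d) / real F = R1) \<and>
     (\<forall>k1\<in>{1..K1}. \<forall>d. valid_demand K1 K2 N d \<longrightarrow> real (T k1 d) / real F \<le> R2) \<and>
     (\<exists>k1\<in>{1..K1}. \<exists>d. valid_demand K1 K2 N d \<and> real (T k1 d) / real F = R2)"

end

theory Submission
  imports Defs
begin

definition xorL :: "nat \<Rightarrow> bool list \<Rightarrow> bool list \<Rightarrow> bool list" where
  "xorL L a b = map (\<lambda>i. a!i \<noteq> b!i) [0..<L]"

definition xsum :: "nat \<Rightarrow> 'a set \<Rightarrow> ('a \<Rightarrow> bool list) \<Rightarrow> bool list" where
  "xsum L A f = map (\<lambda>i. odd (card {a\<in>A. f a ! i})) [0..<L]"

definition idx :: "'a list \<Rightarrow> 'a \<Rightarrow> nat" where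
  "idx l s = (LEAST i. i < length l \<and> l!i = s)"

lemma idx_prop: "s \<in> set l \<Longrightarrow> idx l s < length l \<and> l ! idx l s = s"
  unfolding idx_def
  by (rule LeastI_ex) (metis in_set_conv_nth)

lemma odd_card_split:
  assumes "finite B" "C \<subseteq> B"
  shows "odd (card B) = (odd (card C) \<noteq> odd (card (B - C)))"
proof -
  have "card B = card C + card (B - C)"
    using assms card_Diff_subset[of C B] card_mono[of B C] finite_subset[of C B] by auto
  then show ?thesis by simp
qed

lemma xsum_cong: "(\<And>a. a \<in> A \<Longrightarrow> f a = g a) \<Longrightarrow> xsum L A f = xsum L A g"
  unfolding xsum_def by (metis (mono_tags, lifting) mem_Collect_eq Collect_cong)

lemma xsum_length[simp]: "length (xsum L A f) = L" by (simp add: xsum_def)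
lemma xorL_length[simp]: "length (xorL L a b) = L" by (simp add: xorL_def)

lemma xsum_split:
  assumes "finite B" "C \<subseteq> B"
  shows "xorL L (xsum L B f) (xsum L C f) = xsum L (B - C) f"
  unfolding xorL_def xsum_def
proof (rule map_cong[OF refl])
  fix i assume "i \<in> set [0..<L]"
  have e: "{a\<in>B. f a ! i} - {a\<in>C. f a ! i} = {a\<in>B - C. f a ! i}" by auto
  have "odd (card {a\<in>B. f a ! i}) = (odd (card {a\<in>C. f a ! i}) \<noteq> odd (card {a\<in>B - C. f a ! i}))"
    using odd_card_split[of "{a\<in>B. f a ! i}" "{a\<in>C. f a ! i}"] assms e by auto
  then show "map (\<lambda>i. odd (card {a \<in> B. f a ! i})) [0..<L] ! i \<noteq>
        map (\<lambda>i. odd (card {a \<in> C. f a ! i})) [0..<L] ! i =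
        odd (card {a \<in> B - C. f a ! i})" using \<open>i \<in> set [0..<L]\<close> by auto
qed

lemma xsum_single:
  assumes "finite A" "a0 \<in> A" "length (f a0) = L"
  shows "xorL L (xsum L A f) (xsum L (A - {a0}) f) = f a0"
proof -
  have "xorL L (xsum L A f) (xsum L (A - {a0}) f) = xsum L (A - (A - {a0})) f"
    using assms by (intro xsum_split) auto
  also have "A - (A - {a0}) = {a0}" using assms by auto
  also have "xsum L {a0} f = f a0"
  proof -
    have "xsum L {a0} f = map (\<lambda>i. f a0 ! i) [0..<L]" unfolding xsum_def
    proof (rule map_cong[OF refl])
      fix i
      have "{a\<in>{a0}. f a ! i} = (if f a0 ! i then {a0} else {})" by auto
      then show "odd (card {a\<in>{a0}. f a ! i}) = f a0 ! i" by simp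
    qed
    then show ?thesis using assms(3) map_nth[of "f a0"] by simp
  qed
  finally show ?thesis .
qed

definition Tset :: "nat \<Rightarrow> nat \<Rightarrow> nat \<Rightarrow> (nat \<Rightarrow> nat \<Rightarrow> nat \<Rightarrow> cell) \<Rightarrow> int \<Rightarrow> (nat \<times> nat \<times> nat) set" where
  "Tset K1 K2 F P s = {a. fst a \<in> {1..K1} \<and> fst (snd a) \<in> {1..F} \<and> snd (snd a) \<in> {1..K2}
      \<and> P (fst a) (fst (snd a)) (snd (snd a)) = Val s}"

definition valf :: "demand \<Rightarrow> files \<Rightarrow> nat \<times> nat \<times> nat \<Rightarrow> bool list" where
  "valf d W a = W (d (fst a) (snd (snd a))) (fst (snd a))"

lemma Tset_finite: "finite (Tset K1 K2 F P s)"
proof -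
  have "Tset K1 K2 F P s \<subseteq> {1..K1} \<times> {1..F} \<times> {1..K2}" unfolding Tset_def by auto
  then show ?thesis by (rule finite_subset) auto
qed

lemma card_prod_set:
  "card {(n, j). n \<in> {1..N} \<and> j \<in> {1..F} \<and> Q j} = N * card {j\<in>{1..F}. Q j}"
proof -
  have "{(n, j). n \<in> {1..N} \<and> j \<in> {1..F} \<and> Q j} = {1..N} \<times> {j\<in>{1..F}. Q j}" by auto
  then show ?thesis by (simp add: card_cartesian_product)
qed

theorem theorem1:
  fixes K1 K2 F Z1 Z2 :: nat
    and Sm :: "int set" and Ss :: "nat \<Rightarrow> int set"
    and P0 :: "nat \<Rightarrow> nat \<Rightarrow> bool" and P :: "nat \<Rightarrow> nat \<Rightarrow> nat \<Rightarrow> cell"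
  assumes "is_HPDA K1 K2 F Z1 Z2 Sm Ss P0 P"
  shows "\<forall>N L. N \<ge> K1 * K2 \<longrightarrow>
    (\<exists>ZM ZU X S Y T Dec.
       hier_scheme K1 K2 (real N * real Z1 / real F) (real N * real Z2 / real F) N F L
         ((real (card (\<Union>k1\<in>{1..K1}. Ss k1)) - real (card Sm)) / real F)
         (Max ((\<lambda>k1. real (card (Ss k1)) / real F) ` {1..K1}))
         ZM ZU X S Y T Dec \<and>
       (\<forall>k1\<in>{1..K1}. ZM k1 = {(n, j). n \<in> {1..N} \<and> j \<in> {1..F} \<and> P0 j k1}) \<and>
       (\<forall>k1\<in>{1..K1}. \<forall>k2\<in>{1..K2}.
          ZU k1 k2 = {(n, j). n \<in> {1..N} \<and> j \<in> {1..F} \<and> P k1 j k2 = Star}))"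
proof (intro allI impI)
  fix N L :: nat
  assume NK: "N \<ge> K1 * K2"
  note H = assms[unfolded is_HPDA_def]
  have pos: "K1 > 0" "K2 > 0" "F > 0" using H by auto
  note HB1 = H[THEN conjunct2, THEN conjunct2, THEN conjunct2, THEN conjunct2, THEN conjunct2,
     THEN conjunct2, THEN conjunct2, THEN conjunct1]
  note HB2 = H[THEN conjunct2, THEN conjunct2, THEN conjunct2, THEN conjunct2, THEN conjunct2,
     THEN conjunct2, THEN conjunct2, THEN conjunct2, THEN conjunct1]
  note HB3 = H[THEN conjunct2, THEN conjunct2, THEN conjunct2, THEN conjunct2, THEN conjunct2,
     THEN conjunct2, THEN conjunct2, THEN conjunct2, THEN conjunct2, THEN conjunct1]
  note HB4 = H[THEN conjunct2, THEN conjunct2, THEN conjunct2, THEN conjunct2, THEN conjunct2,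
     THEN conjunct2, THEN conjunct2, THEN conjunct2, THEN conjunct2, THEN conjunct2]
  have Z1c: "\<And>k1. k1 \<in> {1..K1} \<Longrightarrow> card {j\<in>{1..F}. P0 j k1} = Z1" using HB1 by blast
  have PDA: "\<And>k1. k1 \<in> {1..K1} \<Longrightarrow> is_PDA_over K2 F Z2 (Ss k1) (P k1)" using HB2 by blast
  note PD = PDA[unfolded is_PDA_over_def]
  have Ssfin: "\<And>k1. k1 \<in> {1..K1} \<Longrightarrow> finite (Ss k1)" using PD by blast
  have entry: "\<And>k1 j k2. k1 \<in> {1..K1} \<Longrightarrow> j \<in> {1..F} \<Longrightarrow> k2 \<in> {1..K2} \<Longrightarrow>
      P k1 j k2 = Star \<or> (\<exists>s\<in>Ss k1. P k1 j k2 = Val s)"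
  proof -
    fix k1 j k2 assume "k1 \<in> {1..K1}" "j \<in> {1..F}" "k2 \<in> {1..K2}"
    with PD[of k1, THEN conjunct2, THEN conjunct2, THEN conjunct2, THEN conjunct2, THEN conjunct2, THEN conjunct1]
    show "P k1 j k2 = Star \<or> (\<exists>s\<in>Ss k1. P k1 j k2 = Val s)" by blast
  qed
  have Z2c: "\<And>k1 k2. k1 \<in> {1..K1} \<Longrightarrow> k2 \<in> {1..K2} \<Longrightarrow> card {j\<in>{1..F}. P k1 j k2 = Star} = Z2"
  proof -
    fix k1 k2 assume "k1 \<in> {1..K1}" "k2 \<in> {1..K2}"
    with PD[of k1, THEN conjunct2, THEN conjunct2, THEN conjunct2, THEN conjunct2, THEN conjunct2, THEN conjunct2, THEN conjunct1]
    show "card {j\<in>{1..F}. P k1 j k2 = Star} = Z2" by blast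
  qed
  have occ: "\<And>k1 s. k1 \<in> {1..K1} \<Longrightarrow> s \<in> Ss k1 \<Longrightarrow> \<exists>j\<in>{1..F}. \<exists>k2\<in>{1..K2}. P k1 j k2 = Val s"
  proof -
    fix k1 s assume "k1 \<in> {1..K1}" "s \<in> Ss k1"
    with PD[of k1, THEN conjunct2, THEN conjunct2, THEN conjunct2, THEN conjunct2, THEN conjunct2, THEN conjunct2, THEN conjunct2, THEN conjunct1]
    show "\<exists>j\<in>{1..F}. \<exists>k2\<in>{1..K2}. P k1 j k2 = Val s" by blast
  qed
  have C3: "\<And>k1 j1 k21 j2 k22 s. k1 \<in> {1..K1} \<Longrightarrow> j1 \<in> {1..F} \<Longrightarrow> k21 \<in> {1..K2} \<Longrightarrow>
      j2 \<in> {1..F} \<Longrightarrow> k22 \<in> {1..K2} \<Longrightarrow> (j1, k21) \<noteq> (j2, k22) \<Longrightarrow>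
      P k1 j1 k21 = Val s \<Longrightarrow> P k1 j2 k22 = Val s \<Longrightarrow> P k1 j1 k22 = Star"
  proof -
    fix k1 j1 k21 j2 k22 s
    assume a: "k1 \<in> {1..K1}" "j1 \<in> {1..F}" "k21 \<in> {1..K2}" "j2 \<in> {1..F}" "k22 \<in> {1..K2}"
      "(j1, k21) \<noteq> (j2, k22)" "P k1 j1 k21 = Val s" "P k1 j2 k22 = Val s"
    have c: "\<forall>j1\<in>{1..F}. \<forall>k1a\<in>{1..K2}. \<forall>j2\<in>{1..F}. \<forall>k2\<in>{1..K2}. \<forall>s.
        (j1, k1a) \<noteq> (j2, k2) \<and> P k1 j1 k1a = Val s \<and> P k1 j2 k2 = Val s \<longrightarrow>
        j1 \<noteq> j2 \<and> k1a \<noteq> k2 \<and> P k1 j1 k2 = Star \<and> P k1 j2 k1a = Star"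
      using PD[OF a(1)] by (elim conjE)
    show "P k1 j1 k22 = Star" using c[rule_format, OF a(2,3,4,5)] a(6-8) by blast
  qed
  have B3: "\<And>s. s \<in> Sm \<Longrightarrow> (\<exists>!k1. k1 \<in> {1..K1} \<and> (\<exists>j\<in>{1..F}. \<exists>k2\<in>{1..K2}. P k1 j k2 = Val s)) \<and>
        (\<forall>k1\<in>{1..K1}. \<forall>j\<in>{1..F}. \<forall>k2\<in>{1..K2}. P k1 j k2 = Val s \<longrightarrow> P0 j k1)"
    using HB3 by blast
  have B4: "\<And>k1 k1' j j' k2 k2' s t. k1 \<in> {1..K1} \<Longrightarrow> k1' \<in> {1..K1} \<Longrightarrow> j \<in> {1..F} \<Longrightarrow> j' \<in> {1..F} \<Longrightarrow>
        k2 \<in> {1..K2} \<Longrightarrow> k2' \<in> {1..K2} \<Longrightarrow> k1 \<noteq> k1' \<Longrightarrow> P k1 j k2 = Val s \<Longrightarrow> P k1' j' k2' = Val s \<Longrightarrow>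
        P k1 j' k2 = Val t \<Longrightarrow> P0 j' k1"
  proof -
    fix k1 k1' j j' k2 k2' s t
    assume a: "k1 \<in> {1..K1}" "k1' \<in> {1..K1}" "j \<in> {1..F}" "j' \<in> {1..F}"
        "k2 \<in> {1..K2}" "k2' \<in> {1..K2}" "k1 \<noteq> k1'" "P k1 j k2 = Val s" "P k1' j' k2' = Val s"
        "P k1 j' k2 = Val t"
    show "P0 j' k1" using HB4[rule_format, OF a(1,2,3,4,5,6)] a(7-10) by blast
  qed
  define U where "U = (\<Union>k1\<in>{1..K1}. Ss k1)"
  have Ufin: "finite U" unfolding U_def using Ssfin by auto
  have SmU: "Sm \<subseteq> U"
  proof
    fix s assume "s \<in> Sm"
    then obtain k1 j k2 where k: "k1 \<in> {1..K1}" "j\<in>{1..F}" "k2\<in>{1..K2}" "P k1 j k2 = Val s"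
      using B3 by blast
    then show "s \<in> U" unfolding U_def using entry[OF k(1-3)] by auto
  qed
  define lX where "lX = sorted_list_of_set (U - Sm)"
  define lY where "lY = (\<lambda>k1. sorted_list_of_set (Ss k1))"
  define T where "T = Tset K1 K2 F P"
  define A where "A = (\<lambda>k1 s. {a\<in>T s. fst a = k1 \<or> \<not> P0 (fst (snd a)) k1})"
  define ZM where "ZM = (\<lambda>k1. {(n, j). n \<in> {1..N} \<and> j \<in> {1..F} \<and> P0 j k1})"
  define ZU where "ZU = (\<lambda>k1 k2. {(n, j). n \<in> {1..N} \<and> j \<in> {1..F} \<and> P k1 j k2 = Star})"
  define X where "X = (\<lambda>(d::demand) (W::files). map (\<lambda>s. xsum L (T s) (valf d W)) lX)"
  define Sf where "Sf = (\<lambda>d::demand. card (U - Sm))"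
  define Y where "Y = (\<lambda>k1 (d::demand) (Xs::bool list list) (W::files). map (\<lambda>s.
      if s \<in> Sm then xsum L {a\<in>T s. fst a = k1 \<and> P0 (fst (snd a)) k1} (valf d W)
      else xorL L (Xs ! idx lX s) (xsum L {a\<in>T s. fst a \<noteq> k1 \<and> P0 (fst (snd a)) k1} (valf d W))) (lY k1))"
  define Tf where "Tf = (\<lambda>k1 (d::demand). card (Ss k1))"
  define Dec where "Dec = (\<lambda>k1 k2 (d::demand) (Ys::bool list list) (W::files) j.
      if j \<in> {1..F} then (case P k1 j k2 of Star \<Rightarrow> W (d k1 k2) j
        | Val s \<Rightarrow> xorL L (Ys ! idx (lY k1) s)
             (xsum L {a\<in>A k1 s - {(k1, j, k2)}. P k1 (fst (snd a)) k2 = Star} (valf d W)))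
      else [])"
  have "hier_scheme K1 K2 (real N * real Z1 / real F) (real N * real Z2 / real F) N F L
         ((real (card U) - real (card Sm)) / real F)
         (Max ((\<lambda>k1. real (card (Ss k1)) / real F) ` {1..K1}))
         ZM ZU X Sf Y Tf Dec"
  proof -
    have vd1: "\<And>d k1 k2. valid_demand K1 K2 N d \<Longrightarrow> k1 \<in> {1..K1} \<Longrightarrow> k2 \<in> {1..K2} \<Longrightarrow> d k1 k2 \<in> {1..N}"
      unfolding valid_demand_def by blast
    have Tmem: "\<And>s a. a \<in> T s \<Longrightarrow> fst a \<in> {1..K1} \<and> fst (snd a) \<in> {1..F} \<and> snd (snd a) \<in> {1..K2}
        \<and> P (fst a) (fst (snd a)) (snd (snd a)) = Val s"
      unfolding T_def Tset_def by blast
    have Tfin: "\<And>s. finite (T s)" unfolding T_def by (rule Tset_finite)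
    have h1: "\<forall>k1\<in>{1..K1}. ZM k1 \<subseteq> {1..N} \<times> {1..F} \<and>
        real (card (ZM k1)) * real L \<le> (real N * real Z1 / real F) * real (F * L)"
    proof
      fix k1 assume k1: "k1 \<in> {1..K1}"
      have c: "card (ZM k1) = N * Z1" unfolding ZM_def by (simp only: card_prod_set Z1c[OF k1])
      have r: "real N * real Z1 / real F * real (F * L) = real (card (ZM k1)) * real L"
        using pos unfolding c by (simp add: field_simps)
      have sub: "ZM k1 \<subseteq> {1..N} \<times> {1..F}" unfolding ZM_def by blast
      show "ZM k1 \<subseteq> {1..N} \<times> {1..F} \<and>
        real (card (ZM k1)) * real L \<le> (real N * real Z1 / real F) * real (F * L)"
        using sub r by simp
    qed
    have h2: "\<forall>k1\<in>{1..K1}. \<forall>k2\<in>{1..K2}. ZU k1 k2 \<subseteq> {1..N} \<times> {1..F} \<and>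
        real (card (ZU k1 k2)) * real L \<le> (real N * real Z2 / real F) * real (F * L)"
    proof (intro ballI)
      fix k1 k2 assume k1: "k1 \<in> {1..K1}" and k2: "k2 \<in> {1..K2}"
      have c: "card (ZU k1 k2) = N * Z2" unfolding ZU_def by (simp only: card_prod_set Z2c[OF k1 k2])
      have r: "real N * real Z2 / real F * real (F * L) = real (card (ZU k1 k2)) * real L"
        using pos unfolding c by (simp add: field_simps)
      have sub: "ZU k1 k2 \<subseteq> {1..N} \<times> {1..F}" unfolding ZU_def by blast
      show "ZU k1 k2 \<subseteq> {1..N} \<times> {1..F} \<and>
        real (card (ZU k1 k2)) * real L \<le> (real N * real Z2 / real F) * real (F * L)"
        using sub r by simp
    qed
    have h3: "\<forall>d W. valid_demand K1 K2 N d \<and> valid_files N F L W \<longrightarrow>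
        length (X d W) = Sf d \<and> (\<forall>x\<in>set (X d W). length x = L) \<and>
        (\<forall>k1\<in>{1..K1}. length (Y k1 d (X d W) W) = Tf k1 d \<and>
           (\<forall>y\<in>set (Y k1 d (X d W) W). length y = L))"
      unfolding X_def Sf_def Y_def Tf_def lX_def lY_def by auto
    have h4: "\<forall>k1\<in>{1..K1}. \<forall>d Xs. valid_demand K1 K2 N d \<longrightarrow> depends_only_on (ZM k1) (Y k1 d Xs)"
    proof (intro ballI allI impI)
      fix k1 d Xs assume k1: "k1 \<in> {1..K1}" and vd: "valid_demand K1 K2 N d"
      show "depends_only_on (ZM k1) (Y k1 d Xs)" unfolding depends_only_on_def
      proof (intro allI impI)
        fix W W' :: files assume ag: "\<forall>(n, j)\<in>ZM k1. W n j = W' n j"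
        have e: "\<And>s a. a \<in> T s \<Longrightarrow> P0 (fst (snd a)) k1 \<Longrightarrow> valf d W a = valf d W' a"
        proof -
          fix s a assume a: "a \<in> T s" "P0 (fst (snd a)) k1"
          have "(d (fst a) (snd (snd a)), fst (snd a)) \<in> ZM k1"
            using Tmem[OF a(1)] vd1[OF vd] a(2) unfolding ZM_def by auto
          then show "valf d W a = valf d W' a" using ag unfolding valf_def by auto
        qed
        show "Y k1 d Xs W = Y k1 d Xs W'" unfolding Y_def
        proof (rule map_cong[OF refl])
          fix s
          have e1: "xsum L {a\<in>T s. fst a = k1 \<and> P0 (fst (snd a)) k1} (valf d W) =
              xsum L {a\<in>T s. fst a = k1 \<and> P0 (fst (snd a)) k1} (valf d W')"
            by (rule xsum_cong, rule e) auto
          have e2: "xsum L {a\<in>T s. fst a \<noteq> k1 \<and> P0 (fst (snd a)) k1} (valf d W) =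
              xsum L {a\<in>T s. fst a \<noteq> k1 \<and> P0 (fst (snd a)) k1} (valf d W')"
            by (rule xsum_cong, rule e) auto
          show "(if s \<in> Sm then xsum L {a\<in>T s. fst a = k1 \<and> P0 (fst (snd a)) k1} (valf d W)
      else xorL L (Xs ! idx lX s) (xsum L {a\<in>T s. fst a \<noteq> k1 \<and> P0 (fst (snd a)) k1} (valf d W))) =
            (if s \<in> Sm then xsum L {a\<in>T s. fst a = k1 \<and> P0 (fst (snd a)) k1} (valf d W')
      else xorL L (Xs ! idx lX s) (xsum L {a\<in>T s. fst a \<noteq> k1 \<and> P0 (fst (snd a)) k1} (valf d W')))"
            by (simp only: e1 e2)
        qed
      qed
    qed
    have h5: "\<forall>k1\<in>{1..K1}. \<forall>k2\<in>{1..K2}. \<forall>d Ys. valid_demand K1 K2 N d \<longrightarrow>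
        depends_only_on (ZU k1 k2) (Dec k1 k2 d Ys)"
    proof (intro ballI allI impI)
      fix k1 k2 d Ys assume k1: "k1 \<in> {1..K1}" and k2: "k2 \<in> {1..K2}" and vd: "valid_demand K1 K2 N d"
      show "depends_only_on (ZU k1 k2) (Dec k1 k2 d Ys)" unfolding depends_only_on_def
      proof (intro allI impI)
        fix W W' :: files assume ag: "\<forall>(n, j)\<in>ZU k1 k2. W n j = W' n j"
        show "Dec k1 k2 d Ys W = Dec k1 k2 d Ys W'"
        proof
          fix j
          show "Dec k1 k2 d Ys W j = Dec k1 k2 d Ys W' j"
          proof (cases "j \<in> {1..F}")
            case False then show ?thesis unfolding Dec_def by (simp only: if_not_P[OF False] if_False)
          next
            case True
            show ?thesis
            proof (cases "P k1 j k2")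
              case Star
              have "(d k1 k2, j) \<in> ZU k1 k2" using vd1[OF vd k1 k2] True Star unfolding ZU_def by auto
              then show ?thesis using ag True Star unfolding Dec_def by auto
            next
              case (Val s)
              have e: "\<And>a. a \<in> {a\<in>A k1 s - {(k1, j, k2)}. P k1 (fst (snd a)) k2 = Star} \<Longrightarrow>
                  valf d W a = valf d W' a"
              proof -
                fix a assume a: "a \<in> {a\<in>A k1 s - {(k1, j, k2)}. P k1 (fst (snd a)) k2 = Star}"
                then have "a \<in> T s" unfolding A_def by auto
                then have "(d (fst a) (snd (snd a)), fst (snd a)) \<in> ZU k1 k2"
                  using Tmem vd1[OF vd] a unfolding ZU_def by auto
                then show "valf d W a = valf d W' a" using ag unfolding valf_def by auto
              qed
              have ee: "xsum L {a\<in>A k1 s - {(k1, j, k2)}. P k1 (fst (snd a)) k2 = Star} (valf d W) =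
                  xsum L {a\<in>A k1 s - {(k1, j, k2)}. P k1 (fst (snd a)) k2 = Star} (valf d W')"
                by (rule xsum_cong, rule e)
              show ?thesis unfolding Dec_def by (simp only: if_P[OF True] Val cell.case ee)
            qed
          qed
        qed
      qed
    qed
    have Yval: "\<And>k1 d W s. k1 \<in> {1..K1} \<Longrightarrow> s \<in> Ss k1 \<Longrightarrow>
        (Y k1 d (X d W) W) ! idx (lY k1) s = xsum L (A k1 s) (valf d W)"
    proof -
      fix k1 d W s assume k1: "k1 \<in> {1..K1}" and s: "s \<in> Ss k1"
      have sl: "s \<in> set (lY k1)" unfolding lY_def using Ssfin[OF k1] s by simp
      note ip = idx_prop[OF sl]
      have Yn: "(Y k1 d (X d W) W) ! idx (lY k1) s =
          (if s \<in> Sm then xsum L {a\<in>T s. fst a = k1 \<and> P0 (fst (snd a)) k1} (valf d W)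
           else xorL L (X d W ! idx lX s) (xsum L {a\<in>T s. fst a \<noteq> k1 \<and> P0 (fst (snd a)) k1} (valf d W)))"
        unfolding Y_def using ip by simp
      show "(Y k1 d (X d W) W) ! idx (lY k1) s = xsum L (A k1 s) (valf d W)"
      proof (cases "s \<in> Sm")
        case True
        have all: "\<And>a. a \<in> T s \<Longrightarrow> fst a = k1 \<and> P0 (fst (snd a)) k1"
        proof -
          fix a assume a: "a \<in> T s"
          note tm = Tmem[OF a]
          obtain j k2 where jk: "j\<in>{1..F}" "k2\<in>{1..K2}" "P k1 j k2 = Val s" using occ[OF k1 s] by blast
          have "fst a = k1" using B3[OF True, THEN conjunct1] tm k1 jk by blast
          moreover have "P0 (fst (snd a)) (fst a)" using B3[OF True, THEN conjunct2] tm by blast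
          ultimately show "fst a = k1 \<and> P0 (fst (snd a)) k1" by simp
        qed
        have "{a\<in>T s. fst a = k1 \<and> P0 (fst (snd a)) k1} = A k1 s" unfolding A_def using all by auto
        then show ?thesis using Yn True by simp
      next
        case False
        have sx: "s \<in> set lX" unfolding lX_def using Ufin s k1 False U_def by auto
        have Xn: "X d W ! idx lX s = xsum L (T s) (valf d W)" unfolding X_def using idx_prop[OF sx] by simp
        have "xorL L (xsum L (T s) (valf d W)) (xsum L {a\<in>T s. fst a \<noteq> k1 \<and> P0 (fst (snd a)) k1} (valf d W))
            = xsum L (T s - {a\<in>T s. fst a \<noteq> k1 \<and> P0 (fst (snd a)) k1}) (valf d W)"
          by (rule xsum_split[OF Tfin]) auto
        also have "T s - {a\<in>T s. fst a \<noteq> k1 \<and> P0 (fst (snd a)) k1} = A k1 s" unfolding A_def by auto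
        finally show ?thesis using Yn Xn False by simp
      qed
    qed
    have h6: "\<forall>d W. valid_demand K1 K2 N d \<and> valid_files N F L W \<longrightarrow>
        (\<forall>k1\<in>{1..K1}. \<forall>k2\<in>{1..K2}. \<forall>j\<in>{1..F}.
           Dec k1 k2 d (Y k1 d (X d W) W) W j = W (d k1 k2) j)"
    proof (intro allI impI ballI)
      fix d W k1 k2 j
      assume vv: "valid_demand K1 K2 N d \<and> valid_files N F L W" and k1: "k1 \<in> {1..K1}"
        and k2: "k2 \<in> {1..K2}" and j: "j \<in> {1..F}"
      show "Dec k1 k2 d (Y k1 d (X d W) W) W j = W (d k1 k2) j"
      proof (cases "P k1 j k2")
        case Star then show ?thesis using j unfolding Dec_def by simp
      next
        case (Val s)
        have s: "s \<in> Ss k1" using entry[OF k1 j k2] Val by auto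
        define a0 where "a0 = (k1, j, k2)"
        have a0A: "a0 \<in> A k1 s" unfolding a0_def A_def T_def Tset_def using k1 j k2 Val by auto
        have Afin: "finite (A k1 s)" using Tfin unfolding A_def by auto
        have len: "length (valf d W a0) = L" using vv vd1[of d k1 k2] k1 k2 j
          unfolding valf_def a0_def valid_files_def by auto
        have star: "\<And>a. a \<in> A k1 s - {a0} \<Longrightarrow> P k1 (fst (snd a)) k2 = Star"
        proof -
          fix a assume a: "a \<in> A k1 s - {a0}"
          obtain k1' j' k2' where ae: "a = (k1', j', k2')" by (cases a) auto
          have aT: "a \<in> T s" using a unfolding A_def by auto
          note tm = Tmem[OF aT, unfolded ae, simplified]
          show "P k1 (fst (snd a)) k2 = Star"
          proof (cases "k1' = k1")
            case True
            have "(j', k2') \<noteq> (j, k2)" using a ae True unfolding a0_def by auto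
            then show ?thesis using C3[of k1 j' k2' j k2 s] tm True k1 j k2 Val ae by auto
          next
            case False
            have np: "\<not> P0 j' k1" using a ae False unfolding A_def by auto
            show ?thesis
            proof (rule ccontr)
              assume "P k1 (fst (snd a)) k2 \<noteq> Star"
              then obtain t where "P k1 j' k2 = Val t" using entry[of k1 j' k2] k1 k2 tm ae by auto
              then have "P0 j' k1" using B4[of k1 k1' j j' k2 k2' s t] k1 j k2 Val tm False by auto
              then show False using np by simp
            qed
          qed
        qed
        have setq: "{a\<in>A k1 s - {(k1, j, k2)}. P k1 (fst (snd a)) k2 = Star} = A k1 s - {a0}"
          using star unfolding a0_def by auto
        have "Dec k1 k2 d (Y k1 d (X d W) W) W j =
            xorL L (xsum L (A k1 s) (valf d W)) (xsum L (A k1 s - {a0}) (valf d W))"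
          unfolding Dec_def by (simp only: if_P[OF j] Val cell.case setq Yval[OF k1 s])
        also have "\<dots> = valf d W a0" by (rule xsum_single[where f="valf d W", OF Afin a0A len])
        finally show ?thesis unfolding valf_def a0_def by simp
      qed
    qed
    have SmU': "real (card (U - Sm)) = real (card U) - real (card Sm)"
      using SmU Ufin by (simp add: card_Diff_subset finite_subset card_mono of_nat_diff)
    have dex: "valid_demand K1 K2 N (\<lambda>_ _. 1)"
    proof -
      have "K1 * K2 > 0" using pos by simp
      then have "N \<ge> 1" using NK by linarith
      then show ?thesis unfolding valid_demand_def by auto
    qed
    have h7: "\<forall>d. valid_demand K1 K2 N d \<longrightarrow> real (Sf d) / real F \<le> (real (card U) - real (card Sm)) / real F"
      unfolding Sf_def using SmU' by simp
    have h8: "\<exists>d. valid_demand K1 K2 N d \<and> real (Sf d) / real F = (real (card U) - real (card Sm)) / real F"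
      unfolding Sf_def using SmU' dex by auto
    have h9: "\<forall>k1\<in>{1..K1}. \<forall>d. valid_demand K1 K2 N d \<longrightarrow>
        real (Tf k1 d) / real F \<le> Max ((\<lambda>k1. real (card (Ss k1)) / real F) ` {1..K1})"
      unfolding Tf_def by (auto intro: Max_ge)
    have h10: "\<exists>k1\<in>{1..K1}. \<exists>d. valid_demand K1 K2 N d \<and>
        real (Tf k1 d) / real F = Max ((\<lambda>k1. real (card (Ss k1)) / real F) ` {1..K1})"
    proof -
      have "Max ((\<lambda>k1. real (card (Ss k1)) / real F) ` {1..K1}) \<in> (\<lambda>k1. real (card (Ss k1)) / real F) ` {1..K1}"
        using pos by (intro Max_in) auto
      then obtain k1 where "k1 \<in> {1..K1}" "Max ((\<lambda>k1. real (card (Ss k1)) / real F) ` {1..K1}) = real (card (Ss k1)) / real F"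
        by auto
      then show ?thesis unfolding Tf_def using dex by metis
    qed
    show ?thesis unfolding hier_scheme_def
      by (intro conjI h1 h2 h3 h4 h5 h6 h7 h8 h9 h10)
  qed
  then show "\<exists>ZM ZU X S Y T Dec.
       hier_scheme K1 K2 (real N * real Z1 / real F) (real N * real Z2 / real F) N F L
         ((real (card (\<Union>k1\<in>{1..K1}. Ss k1)) - real (card Sm)) / real F)
         (Max ((\<lambda>k1. real (card (Ss k1)) / real F) ` {1..K1}))
         ZM ZU X S Y T Dec \<and>
       (\<forall>k1\<in>{1..K1}. ZM k1 = {(n, j). n \<in> {1..N} \<and> j \<in> {1..F} \<and> P0 j k1}) \<and>
       (\<forall>k1\<in>{1..K1}. \<forall>k2\<in>{1..K2}.
          ZU k1 k2 = {(n, j). n \<in> {1..N} \<and> j \<in> {1..F} \<and> P k1 j k2 = Star})"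
    unfolding U_def ZM_def ZU_def by blast
qed

end
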